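(* In the toroidal setting below, if $(\lambda_1,\lambda_2)$ is an interior simple zero of $P$, then the map $\hat\phi$ is bounded.
   Context: Toroidal setting: ${\mathcal G}$ is a bipartite graph embedded on a torus with disk faces, admitting dimer covers, nondegenerate, with positive edge weights; $l_1,l_2$ dual cycles generating $H_1$ with $l_1\wedge l_2=+1$; $K(\lambda_1,\lambda_2)$ a real Kasteleyn matrix with entries of edges crossing $l_i$ multiplied by $\lambda_i^{\pm1}$ according to the side of the white vertex; $P=\det K(\lambda_1,\lambda_2)$. An interior simple zero is a simple zero of $P$ with $\lambda_1,\lambda_2$ not both real; there $\ker K$ and $\ker K^t$ are one-dimensional. $\tilde{\mathcal G}$ is the lift to the universal cover with deck translations $p_1,p_2$, $\tilde K$ the lift of $K(1,1)$, $\tilde{\mathcal G}^*$ its dual. $F\in\ker K(\lambda_1,\lambda_2)$, $G\in\ker K(\lambda_1,\lambda_2)^t$ are extended by $F(b+p_j)=\lambda_jF(b)$, $G(w+p_j)=\lambda_j^{-1}G(w)$. $\hat\omega(wb)=\overline{G(w)}\tilde K_{wb}F(b)$ and $\hat\phi$ on vertices of $\tilde{\mathcal G}^*$ is defined up to an additive constant by $\hat\phi(f_1)-\hat\phi(f_2)=\hat\omega(wb)$, $f_1$/$f_2$ the faces to the left/right of the edge oriented from $w$ to $b$. *)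

theory Defs
  imports "HOL-Analysis.Complex_Analysis_Basics" "Jordan_Normal_Form.Determinant"
begin

(* White vertices: 0..<n, black vertices: 0..<n (separate index sets).
   Edges: elements of E :: 'e set; wv e / bv e are the white / black endpoints.
   cwW e / cwB e : the edge following e in clockwise order around its white /
   black endpoint (rotation system; this fixes the orientation of the surface).
   Darts: (e, True) = e oriented white->black, (e, False) = black->white.
   The face to the left of a dart is the orbit of that dart under face_next. *)

type_synonym pt = "int \<times> int"

definition padd :: "pt \<Rightarrow> pt \<Rightarrow> pt" where
  "padd x y = (fst x + fst y, snd x + snd y)"

definition psub :: "pt \<Rightarrow> pt \<Rightarrow> pt" where
  "psub x y = (fst x - fst y, snd x - snd y)"

definition face_next :: "('e \<Rightarrow> 'e) \<Rightarrow> ('e \<Rightarrow> 'e) \<Rightarrow> 'e \<times> bool \<Rightarrow> 'e \<times> bool" where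
  "face_next cwW cwB d = (if snd d then (cwB (fst d), False) else (cwW (fst d), True))"

definition orbit_of :: "('a \<Rightarrow> 'a) \<Rightarrow> 'a \<Rightarrow> 'a set" where
  "orbit_of f d = {(f ^^ k) d | k. True}"

definition faces :: "'e set \<Rightarrow> ('e \<Rightarrow> 'e) \<Rightarrow> ('e \<Rightarrow> 'e) \<Rightarrow> ('e \<times> bool) set set" where
  "faces E cwW cwB = orbit_of (face_next cwW cwB) ` (E \<times> UNIV)"

(* lifted darts: (dart, position of the tail vertex in Z^2);
   lifted edge (e,x) joins white (wv e, x) to black (bv e, x + s e) *)
definition lift_face_next ::
  "('e \<Rightarrow> 'e) \<Rightarrow> ('e \<Rightarrow> 'e) \<Rightarrow> ('e \<Rightarrow> pt) \<Rightarrow> ('e \<times> bool) \<times> pt \<Rightarrow> ('e \<times> bool) \<times> pt" where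
  "lift_face_next cwW cwB s ld =
     (let e = fst (fst ld); x = snd ld in
      if snd (fst ld) then ((cwB e, False), padd x (s e)) else ((cwW e, True), psub x (s e)))"

definition rotation_system ::
  "nat \<Rightarrow> 'e set \<Rightarrow> ('e \<Rightarrow> nat) \<Rightarrow> ('e \<Rightarrow> nat) \<Rightarrow> ('e \<Rightarrow> 'e) \<Rightarrow> ('e \<Rightarrow> 'e) \<Rightarrow> bool" where
  "rotation_system n E wv bv cwW cwB \<longleftrightarrow>
     (\<forall>e\<in>E. wv e < n \<and> bv e < n) \<and>
     bij_betw cwW E E \<and> bij_betw cwB E E \<and>
     (\<forall>e\<in>E. wv (cwW e) = wv e \<and> bv (cwB e) = bv e) \<and>
     (\<forall>e\<in>E. \<forall>e'\<in>E. wv e = wv e' \<longrightarrow> (\<exists>k. (cwW ^^ k) e = e')) \<and>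
     (\<forall>e\<in>E. \<forall>e'\<in>E. bv e = bv e' \<longrightarrow> (\<exists>k. (cwB ^^ k) e = e'))"

(* adjacency in the lift; vertices ((True,w),x) white, ((False,b),x) black *)
definition lift_adj ::
  "'e set \<Rightarrow> ('e \<Rightarrow> nat) \<Rightarrow> ('e \<Rightarrow> nat) \<Rightarrow> ('e \<Rightarrow> pt) \<Rightarrow> (bool \<times> nat) \<times> pt \<Rightarrow> (bool \<times> nat) \<times> pt \<Rightarrow> bool" where
  "lift_adj E wv bv s u v \<longleftrightarrow>
     (\<exists>e\<in>E. \<exists>x. (u = ((True, wv e), x) \<and> v = ((False, bv e), padd x (s e))) \<or>
                (v = ((True, wv e), x) \<and> u = ((False, bv e), padd x (s e))))"

(* G is a bipartite graph cellularly embedded in the torus (connected rotation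
   system with Euler characteristic 0), s e = (signed crossings of e with l1,
   signed crossings of e with l2) in {-1,0,1}^2, the lift along s has closed
   faces and is connected, i.e. it is the lift to the universal cover with
   deck translations p1=(1,0), p2=(0,1). *)
definition toroidal_graph ::
  "nat \<Rightarrow> 'e set \<Rightarrow> ('e \<Rightarrow> nat) \<Rightarrow> ('e \<Rightarrow> nat) \<Rightarrow> ('e \<Rightarrow> 'e) \<Rightarrow> ('e \<Rightarrow> 'e) \<Rightarrow> ('e \<Rightarrow> pt) \<Rightarrow> bool" where
  "toroidal_graph n E wv bv cwW cwB s \<longleftrightarrow>
     finite E \<and> rotation_system n E wv bv cwW cwB \<and>
     int (2 * n) - int (card E) + int (card (faces E cwW cwB)) = 0 \<and>
     (\<forall>e\<in>E. fst (s e) \<in> {-1, 0, 1} \<and> snd (s e) \<in> {-1, 0, 1}) \<and>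
     (\<forall>d \<in> E \<times> UNIV. \<exists>k>0. (lift_face_next cwW cwB s ^^ k) (d, (0, 0)) = (d, (0, 0))) \<and>
     (\<forall>c c' i j x y. i < n \<longrightarrow> j < n \<longrightarrow> (lift_adj E wv bv s)\<^sup>*\<^sup>* ((c, i), x) ((c', j), y))"

definition dimer_cover :: "nat \<Rightarrow> 'e set \<Rightarrow> ('e \<Rightarrow> nat) \<Rightarrow> ('e \<Rightarrow> nat) \<Rightarrow> 'e set \<Rightarrow> bool" where
  "dimer_cover n E wv bv M \<longleftrightarrow> M \<subseteq> E \<and>
     (\<forall>w<n. \<exists>!e. e \<in> M \<and> wv e = w) \<and> (\<forall>b<n. \<exists>!e. e \<in> M \<and> bv e = b)"

definition nondegenerate :: "nat \<Rightarrow> 'e set \<Rightarrow> ('e \<Rightarrow> nat) \<Rightarrow> ('e \<Rightarrow> nat) \<Rightarrow> bool" where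
  "nondegenerate n E wv bv \<longleftrightarrow> (\<forall>e\<in>E. \<exists>M. dimer_cover n E wv bv M \<and> e \<in> M)"

(* real Kasteleyn weighting K e = +- nu e with nu e > 0, and Kasteleyn sign
   condition: around every face of degree 2k the product of signs is (-1)^(k+1) *)
definition real_kasteleyn :: "'e set \<Rightarrow> ('e \<Rightarrow> 'e) \<Rightarrow> ('e \<Rightarrow> 'e) \<Rightarrow> ('e \<Rightarrow> real) \<Rightarrow> ('e \<Rightarrow> real) \<Rightarrow> bool" where
  "real_kasteleyn E cwW cwB \<nu> K \<longleftrightarrow>
     (\<forall>e\<in>E. \<nu> e > 0 \<and> (K e = \<nu> e \<or> K e = - \<nu> e)) \<and>
     (\<forall>f\<in>faces E cwW cwB. (\<Prod>d\<in>f. sgn (K (fst d))) = (-1) ^ (card f div 2 + 1))"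

definition Kmat :: "nat \<Rightarrow> 'e set \<Rightarrow> ('e \<Rightarrow> nat) \<Rightarrow> ('e \<Rightarrow> nat) \<Rightarrow> ('e \<Rightarrow> pt) \<Rightarrow> ('e \<Rightarrow> real)
                    \<Rightarrow> complex \<Rightarrow> complex \<Rightarrow> complex mat" where
  "Kmat n E wv bv s K l1 l2 = mat n n (\<lambda>(w, b).
      \<Sum>e\<in>{e\<in>E. wv e = w \<and> bv e = b}. complex_of_real (K e) * l1 powi fst (s e) * l2 powi snd (s e))"

definition interior_simple_zero :: "(complex \<Rightarrow> complex \<Rightarrow> complex) \<Rightarrow> complex \<Rightarrow> complex \<Rightarrow> bool" where
  "interior_simple_zero P l1 l2 \<longleftrightarrow> l1 \<noteq> 0 \<and> l2 \<noteq> 0 \<and> \<not> (l1 \<in> \<real> \<and> l2 \<in> \<real>) \<and>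
     P l1 l2 = 0 \<and> (deriv (\<lambda>z. P z l2) l1 \<noteq> 0 \<or> deriv (\<lambda>z. P l1 z) l2 \<noteq> 0)"

(* omega-hat on the lifted edge (e,x), from (wv e, x) to (bv e, x + s e) *)
definition omega_hat :: "('e \<Rightarrow> nat) \<Rightarrow> ('e \<Rightarrow> nat) \<Rightarrow> ('e \<Rightarrow> pt) \<Rightarrow> ('e \<Rightarrow> real) \<Rightarrow> complex \<Rightarrow> complex
                        \<Rightarrow> (nat \<Rightarrow> complex) \<Rightarrow> (nat \<Rightarrow> complex) \<Rightarrow> 'e \<Rightarrow> pt \<Rightarrow> complex" where
  "omega_hat wv bv s K l1 l2 F G e x =
     (let y = padd x (s e) in
      cnj (l1 powi (- fst x) * l2 powi (- snd x) * G (wv e)) * complex_of_real (K e)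
      * (l1 powi fst y * l2 powi snd y * F (bv e)))"

end

theory Submission
  imports Defs
begin

lemma alg1: "(l::complex) \<noteq> 0 \<Longrightarrow> cnj (A / l * C * g) * k * (B * l * D * f) = l / cnj l * (cnj (A * C * g) * k * (B * D * f))"
  by (simp add: field_simps)
lemma alg2: "(l::complex) \<noteq> 0 \<Longrightarrow> cnj (C * (A / l) * g) * k * (D * (B * l) * f) = l / cnj l * (cnj (C * A * g) * k * (D * B * f))"
  by (simp add: field_simps)
lemma om1: assumes "l1 \<noteq> 0"
  shows "omega_hat wv bv s K l1 l2 F G e (padd x (1,0)) = (l1 / cnj l1) * omega_hat wv bv s K l1 l2 F G e x"
proof -
  have a: "l1 powi (- (fst x + 1)) = l1 powi (- fst x) / l1" using assms
    by (simp add: power_int_diff power_int_minus field_simps)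
  have b: "l1 powi (fst x + 1 + fst (s e)) = l1 powi (fst x + fst (s e)) * l1" using assms
    by (metis add.commute add.left_commute power_int_add_1)
  show ?thesis unfolding omega_hat_def padd_def Let_def fst_conv snd_conv add_0_right a b
    using alg1[OF assms] by simp
qed
lemma om2: assumes "l2 \<noteq> 0"
  shows "omega_hat wv bv s K l1 l2 F G e (padd x (0,1)) = (l2 / cnj l2) * omega_hat wv bv s K l1 l2 F G e x"
proof -
  have a: "l2 powi (- (snd x + 1)) = l2 powi (- snd x) / l2" using assms
    by (simp add: power_int_diff power_int_minus field_simps)
  have b: "l2 powi (snd x + 1 + snd (s e)) = l2 powi (snd x + snd (s e)) * l2" using assms
    by (metis add.commute add.left_commute power_int_add_1)
  show ?thesis unfolding omega_hat_def padd_def Let_def fst_conv snd_conv add_0_right a b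
    using alg2[OF assms] by simp
qed


lemma padd_psub[simp]: "padd (psub x y) y = x" "psub (padd x y) y = x"
  by (auto simp: padd_def psub_def)

definition ltail :: "('e \<Rightarrow> nat) \<Rightarrow> ('e \<Rightarrow> nat) \<Rightarrow> ('e \<times> bool) \<times> pt \<Rightarrow> (bool \<times> nat) \<times> pt" where
  "ltail wv bv a = ((snd (fst a), if snd (fst a) then wv (fst (fst a)) else bv (fst (fst a))), snd a)"

lemma iter_in: assumes "bij_betw f E E" "e \<in> E" shows "(f ^^ k) e \<in> E"
  using assms by (induction k) (auto dest: bij_betwE)

lemma conn:
  fixes \<psi> :: "('e \<times> bool) \<times> pt \<Rightarrow> 'b"
  assumes tg: "toroidal_graph n E wv bv cwW cwB s"
    and inv1: "\<forall>d\<in>E \<times> UNIV. \<forall>x. \<psi> (lift_face_next cwW cwB s (d, x)) = \<psi> (d, x)"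
    and inv2: "\<forall>e\<in>E. \<forall>x. \<psi> ((e, True), x) = \<psi> ((e, False), padd x (s e))"
    and aE: "fst (fst a) \<in> E" and bE: "fst (fst b) \<in> E"
  shows "\<psi> a = \<psi> b"
proof -
  have rs: "rotation_system n E wv bv cwW cwB" using tg unfolding toroidal_graph_def by simp
  hence bW: "bij_betw cwW E E" and bB: "bij_betw cwB E E"
    and rW: "\<forall>e\<in>E. \<forall>e'\<in>E. wv e = wv e' \<longrightarrow> (\<exists>k. (cwW ^^ k) e = e')"
    and rB: "\<forall>e\<in>E. \<forall>e'\<in>E. bv e = bv e' \<longrightarrow> (\<exists>k. (cwB ^^ k) e = e')"
    and lt: "\<forall>e\<in>E. wv e < n \<and> bv e < n"
    unfolding rotation_system_def by auto
  have conn: "\<And>c c' i j x y. i < n \<Longrightarrow> j < n \<Longrightarrow> (lift_adj E wv bv s)\<^sup>*\<^sup>* ((c, i), x) ((c', j), y)"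
    using tg unfolding toroidal_graph_def by blast
  have W: "\<psi> ((cwW e, True), x) = \<psi> ((e, True), x)" if "e \<in> E" for e x
  proof -
    have "lift_face_next cwW cwB s ((e, False), padd x (s e)) = ((cwW e, True), x)"
      by (simp add: lift_face_next_def)
    then show ?thesis using inv1 inv2 that by (metis SigmaI UNIV_I)
  qed
  have B: "\<psi> ((cwB e, False), x) = \<psi> ((e, False), x)" if "e \<in> E" for e x
  proof -
    have "lift_face_next cwW cwB s ((e, True), psub x (s e)) = ((cwB e, False), x)"
      by (simp add: lift_face_next_def)
    then show ?thesis using inv1 inv2 that by (metis SigmaI UNIV_I padd_psub(1))
  qed
  have Wk: "\<psi> (((cwW ^^ k) e, True), x) = \<psi> ((e, True), x)" if "e \<in> E" for e x k
  proof (induction k)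
    case (Suc k) then show ?case using W[OF iter_in[OF bW that, of k]] by simp
  qed simp
  have Bk: "\<psi> (((cwB ^^ k) e, False), x) = \<psi> ((e, False), x)" if "e \<in> E" for e x k
  proof (induction k)
    case (Suc k) then show ?case using B[OF iter_in[OF bB that, of k]] by simp
  qed simp
  have same: "\<psi> a = \<psi> b" if "ltail wv bv a = ltail wv bv b" "fst (fst a) \<in> E" "fst (fst b) \<in> E" for a b
  proof -
    obtain e c x where a: "a = ((e, c), x)" by (metis prod.collapse)
    obtain e' c' x' where b: "b = ((e', c'), x')" by (metis prod.collapse)
    have eE: "e \<in> E" "e' \<in> E" using that a b by auto
    show ?thesis
    proof (cases c)
      case True
      then have "c' = True" "wv e = wv e'" "x = x'" using that(1) a b by (auto simp: ltail_def)
      then obtain k where "(cwW ^^ k) e = e'" using rW eE by blast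
      then show ?thesis using Wk[OF eE(1), where x=x and k=k] a b True \<open>c' = True\<close> \<open>x = x'\<close> by simp
    next
      case False
      then have "c' = False" "bv e = bv e'" "x = x'" using that(1) a b by (auto simp: ltail_def split: if_splits)
      then obtain k where "(cwB ^^ k) e = e'" using rB eE by blast
      then show ?thesis using Bk[OF eE(1), where x=x and k=k] a b False \<open>c' = False\<close> \<open>x = x'\<close> by simp
    qed
  qed
  have path: "(lift_adj E wv bv s)\<^sup>*\<^sup>* u v \<Longrightarrow> ltail wv bv a = u \<Longrightarrow> fst (fst a) \<in> E \<Longrightarrow>
      (\<forall>b. ltail wv bv b = v \<longrightarrow> fst (fst b) \<in> E \<longrightarrow> \<psi> a = \<psi> b)" for u v a
  proof (induction v rule: rtranclp_induct)
    case base
    then show ?case using same by metis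
  next
    case (step v w)
    from step.hyps(2) obtain e x where eE: "e \<in> E" and
      vw: "(v = ((True, wv e), x) \<and> w = ((False, bv e), padd x (s e))) \<or>
           (w = ((True, wv e), x) \<and> v = ((False, bv e), padd x (s e)))"
      unfolding lift_adj_def by blast
    have eq: "\<psi> ((e, True), x) = \<psi> ((e, False), padd x (s e))" using inv2 eE by blast
    show ?case
    proof (intro allI impI)
      fix b assume b: "ltail wv bv b = w" "fst (fst b) \<in> E"
      have IH: "\<forall>b. ltail wv bv b = v \<longrightarrow> fst (fst b) \<in> E \<longrightarrow> \<psi> a = \<psi> b"
        using step.IH step.prems by blast
      from vw show "\<psi> a = \<psi> b"
      proof
        assume h: "v = ((True, wv e), x) \<and> w = ((False, bv e), padd x (s e))"
        have "\<psi> a = \<psi> ((e, True), x)" using IH[rule_format, of "((e, True), x)"] h eE by (simp add: ltail_def)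
        also have "\<dots> = \<psi> ((e, False), padd x (s e))" by (rule eq)
        also have "\<dots> = \<psi> b" using same[of "((e, False), padd x (s e))" b] b h eE by (auto simp: ltail_def)
        finally show ?thesis .
      next
        assume h: "w = ((True, wv e), x) \<and> v = ((False, bv e), padd x (s e))"
        have "\<psi> a = \<psi> ((e, False), padd x (s e))" using IH[rule_format, of "((e, False), padd x (s e))"] h eE by (simp add: ltail_def)
        also have "\<dots> = \<psi> ((e, True), x)" by (rule eq[symmetric])
        also have "\<dots> = \<psi> b" using same[of "((e, True), x)" b] b h eE by (auto simp: ltail_def)
        finally show ?thesis .
      qed
    qed
  qed
  have "(lift_adj E wv bv s)\<^sup>*\<^sup>* (ltail wv bv a) (ltail wv bv b)"
    unfolding ltail_def using conn lt aE bE by simp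
  then show ?thesis using path aE bE by blast
qed


lemma lfn_shift: "lift_face_next cwW cwB s (d, padd x p) =
   (fst (lift_face_next cwW cwB s (d, x)), padd (snd (lift_face_next cwW cwB s (d, x))) p)"
  by (auto simp: lift_face_next_def padd_def psub_def Let_def)

lemma padd_comm: "padd (padd x p) q = padd (padd x q) p"
  by (simp add: padd_def)

lemma shift_const:
  fixes \<phi> :: "('e \<times> bool) \<times> pt \<Rightarrow> complex"
  assumes tg: "toroidal_graph n E wv bv cwW cwB s"
    and inv1: "\<forall>d\<in>E \<times> UNIV. \<forall>x. \<phi> (lift_face_next cwW cwB s (d, x)) = \<phi> (d, x)"
    and inv2: "\<forall>e\<in>E. \<forall>x. \<phi> ((e, True), x) - \<phi> ((e, False), padd x (s e)) = \<omega> e x"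
    and om: "\<forall>e x. \<omega> e (padd x p) = \<mu> * \<omega> e x"
  shows "\<exists>c. \<forall>d\<in>E \<times> UNIV. \<forall>x. \<phi> (d, padd x p) = \<mu> * \<phi> (d, x) + c"
proof (cases "E = {}")
  case True then show ?thesis by simp
next
  case False
  then obtain e0 where e0: "e0 \<in> E" by blast
  define \<psi> where "\<psi> a = \<phi> (fst a, padd (snd a) p) - \<mu> * \<phi> a" for a
  have i1: "\<forall>d\<in>E \<times> UNIV. \<forall>x. \<psi> (lift_face_next cwW cwB s (d, x)) = \<psi> (d, x)"
  proof (intro ballI allI)
    fix d x assume d: "d \<in> E \<times> (UNIV :: bool set)"
    have "\<phi> (lift_face_next cwW cwB s (d, padd x p)) = \<phi> (d, padd x p)" using inv1 d by blast
    then have "\<phi> (fst (lift_face_next cwW cwB s (d, x)), padd (snd (lift_face_next cwW cwB s (d, x))) p) = \<phi> (d, padd x p)"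
      by (simp add: lfn_shift)
    moreover have "\<phi> (lift_face_next cwW cwB s (d, x)) = \<phi> (d, x)" using inv1 d by blast
    ultimately show "\<psi> (lift_face_next cwW cwB s (d, x)) = \<psi> (d, x)" unfolding \<psi>_def by simp
  qed
  have i2: "\<forall>e\<in>E. \<forall>x. \<psi> ((e, True), x) = \<psi> ((e, False), padd x (s e))"
  proof (intro ballI allI)
    fix e x assume e: "e \<in> E"
    have 1: "\<phi> ((e, True), padd x p) - \<phi> ((e, False), padd (padd x (s e)) p) = \<omega> e (padd x p)"
      using inv2 e padd_comm by metis
    have 2: "\<phi> ((e, True), x) - \<phi> ((e, False), padd x (s e)) = \<omega> e x" using inv2 e by blast
    have "\<psi> ((e, True), x) - \<psi> ((e, False), padd x (s e)) = \<omega> e (padd x p) - \<mu> * \<omega> e x"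
      unfolding \<psi>_def using 1 2 by (simp add: algebra_simps)
    then show "\<psi> ((e, True), x) = \<psi> ((e, False), padd x (s e))" using om by simp
  qed
  have "\<forall>d\<in>E \<times> UNIV. \<forall>x. \<psi> (d, x) = \<psi> ((e0, True), (0, 0))"
    using conn[OF tg i1 i2] e0 by auto
  then show ?thesis unfolding \<psi>_def by (intro exI[of _ "\<psi> ((e0, True), (0, 0))"]) (auto simp: \<psi>_def algebra_simps)
qed

lemma int_const: fixes h :: "int \<Rightarrow> real" assumes "\<And>i. h (i + 1) = h i" shows "h i = h 0"
proof (induction i rule: int_induct[where k=0])
  case (step2 i) then show ?case using assms[of "i - 1"] by simp
next
  case (step1 i) then show ?case using assms[of i] by simp
qed simp

lemma pt_const:
  fixes f :: "pt \<Rightarrow> real"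
  assumes a: "\<And>x. f (padd x (1, 0)) = f x" and b: "\<And>x. f (padd x (0, 1)) = f x"
  shows "f x = f (0, 0)"
proof -
  obtain i j where x: "x = (i, j)" by fastforce
  have ai: "f (k + 1, j) = f (k, j)" for k using a[of "(k, j)"] by (simp add: padd_def)
  have bi: "f (0, k + 1) = f (0, k)" for k using b[of "(0, k)"] by (simp add: padd_def)
  have "f (i, j) = f (0, j)" using int_const[of "\<lambda>i. f (i, j)", OF ai] .
  also have "\<dots> = f (0, 0)" using int_const[of "\<lambda>j. f (0, j)", OF bi] .
  finally show ?thesis using x by simp
qed


theorem mainTheorem7:
  fixes n :: nat and E :: "'e set" and wv bv :: "'e \<Rightarrow> nat" and cwW cwB :: "'e \<Rightarrow> 'e"
    and s :: "'e \<Rightarrow> int \<times> int" and \<nu> K :: "'e \<Rightarrow> real" and l1 l2 :: complex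
    and F G :: "nat \<Rightarrow> complex" and \<phi> :: "('e \<times> bool) \<times> (int \<times> int) \<Rightarrow> complex"
  assumes "toroidal_graph n E wv bv cwW cwB s"
    and "\<exists>M. dimer_cover n E wv bv M"
    and "nondegenerate n E wv bv"
    and "real_kasteleyn E cwW cwB \<nu> K"
    and "interior_simple_zero (\<lambda>a b. det (Kmat n E wv bv s K a b)) l1 l2"
    and "\<forall>w<n. (\<Sum>b<n. Kmat n E wv bv s K l1 l2 $$ (w, b) * F b) = 0"
    and "\<forall>b<n. (\<Sum>w<n. Kmat n E wv bv s K l1 l2 $$ (w, b) * G w) = 0"
    and "\<forall>d\<in>E \<times> UNIV. \<forall>x. \<phi> (lift_face_next cwW cwB s (d, x)) = \<phi> (d, x)"
    and "\<forall>e\<in>E. \<forall>x. \<phi> ((e, True), x) - \<phi> ((e, False), padd x (s e))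
                     = omega_hat wv bv s K l1 l2 F G e x"
  shows "\<exists>M. \<forall>d\<in>E \<times> UNIV. \<forall>x. cmod (\<phi> (d, x)) \<le> M"
proof -
  note tg = assms(1) and inv1 = assms(8) and inv2 = assms(9)
  have l0: "l1 \<noteq> 0" "l2 \<noteq> 0" and nr: "\<not> (l1 \<in> \<real> \<and> l2 \<in> \<real>)"
    using assms(5) unfolding interior_simple_zero_def by blast+
  define \<mu>1 where "\<mu>1 = l1 / cnj l1"
  define \<mu>2 where "\<mu>2 = l2 / cnj l2"
  have m1: "cmod \<mu>1 = 1" "cmod \<mu>2 = 1" using l0 by (auto simp: \<mu>1_def \<mu>2_def norm_divide)
  have r1: "\<mu>1 = 1 \<Longrightarrow> l1 \<in> \<real>" using l0 by (auto simp: \<mu>1_def Reals_cnj_iff)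
  have r2: "\<mu>2 = 1 \<Longrightarrow> l2 \<in> \<real>" using l0 by (auto simp: \<mu>2_def Reals_cnj_iff)
  have "finite E" using tg unfolding toroidal_graph_def by blast
  then have fin: "finite (E \<times> (UNIV :: bool set))" by simp
  have "\<forall>e x. omega_hat wv bv s K l1 l2 F G e (padd x (1,0)) = \<mu>1 * omega_hat wv bv s K l1 l2 F G e x"
    unfolding \<mu>1_def by (intro allI) (rule om1[OF l0(1)])
  from shift_const[OF tg inv1 inv2 this] obtain c1 where c1: "\<forall>d\<in>E \<times> UNIV. \<forall>x. \<phi> (d, padd x (1,0)) = \<mu>1 * \<phi> (d, x) + c1"
    by (elim exE)
  have "\<forall>e x. omega_hat wv bv s K l1 l2 F G e (padd x (0,1)) = \<mu>2 * omega_hat wv bv s K l1 l2 F G e x"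
    unfolding \<mu>2_def by (intro allI) (rule om2[OF l0(2)])
  from shift_const[OF tg inv1 inv2 this] obtain c2 where c2: "\<forall>d\<in>E \<times> UNIV. \<forall>x. \<phi> (d, padd x (0,1)) = \<mu>2 * \<phi> (d, x) + c2"
    by (elim exE)
  show ?thesis
  proof (cases "E = {}")
    case True then show ?thesis by simp
  next
    case False
    then obtain e0 where e0: "(e0, True) \<in> E \<times> (UNIV :: bool set)" by blast
    let ?x = "(0, 0) :: pt"
    have "\<phi> ((e0,True), padd (padd ?x (1,0)) (0,1)) = \<mu>2 * (\<mu>1 * \<phi> ((e0,True), ?x) + c1) + c2"
      using c1[rule_format, OF e0, of ?x] c2[rule_format, OF e0, of "padd ?x (1,0)"] by simp
    moreover have "\<phi> ((e0,True), padd (padd ?x (0,1)) (1,0)) = \<mu>1 * (\<mu>2 * \<phi> ((e0,True), ?x) + c2) + c1"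
      using c2[rule_format, OF e0, of ?x] c1[rule_format, OF e0, of "padd ?x (0,1)"] by simp
    ultimately have comm: "c1 * (\<mu>2 - 1) = c2 * (\<mu>1 - 1)"
      by (simp add: padd_comm[of ?x "(1,0)"] algebra_simps)
    obtain \<alpha> where al: "c1 = \<alpha> * (\<mu>1 - 1)" "c2 = \<alpha> * (\<mu>2 - 1)"
    proof (cases "\<mu>1 = 1")
      case True
      then have "\<mu>2 \<noteq> 1" using r1 r2 nr by blast
      then show ?thesis using comm True by (intro that[of "c2 / (\<mu>2 - 1)"]) auto
    next
      case False
      then show ?thesis using comm by (intro that[of "c1 / (\<mu>1 - 1)"]) (auto simp: field_simps)
    qed
    define hh where "hh a = \<phi> a + \<alpha>" for a
    have cst: "cmod (hh (d, x)) = cmod (hh (d, (0, 0)))" if d: "d \<in> E \<times> UNIV" for d x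
    proof (rule pt_const[of "\<lambda>x. cmod (hh (d, x))"])
      fix x show "cmod (hh (d, padd x (1, 0))) = cmod (hh (d, x))"
        proof -
        have "hh (d, padd x (1, 0)) = \<mu>1 * hh (d, x)"
          using c1[rule_format, OF d, of x] al by (simp add: hh_def algebra_simps)
        then show ?thesis using m1 by (simp add: norm_mult)
      qed
    next
      fix x show "cmod (hh (d, padd x (0, 1))) = cmod (hh (d, x))"
        proof -
        have "hh (d, padd x (0, 1)) = \<mu>2 * hh (d, x)"
          using c2[rule_format, OF d, of x] al by (simp add: hh_def algebra_simps)
        then show ?thesis using m1 by (simp add: norm_mult)
      qed
    qed
    show ?thesis
    proof (intro exI ballI allI)
      fix d x assume d: "d \<in> E \<times> (UNIV :: bool set)"
      have "cmod (\<phi> (d, x)) = cmod (hh (d, x) - \<alpha>)" by (simp add: hh_def)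
      also have "\<dots> \<le> cmod (hh (d, x)) + cmod \<alpha>" by (rule norm_triangle_ineq4)
      also have "\<dots> = cmod (hh (d, (0,0))) + cmod \<alpha>" using cst[OF d] by simp
      also have "\<dots> \<le> (\<Sum>a\<in>E \<times> UNIV. cmod (hh (a, (0,0)))) + cmod \<alpha>"
        using member_le_sum[OF d _ fin, of "\<lambda>a. cmod (hh (a, (0,0)))"] by simp
      finally show "cmod (\<phi> (d, x)) \<le> (\<Sum>a\<in>E \<times> UNIV. cmod (hh (a, (0,0)))) + cmod \<alpha>" .
    qed
  qed
qed

end
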